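(* Let $X$ be a complex Banach space, let $\theta\in(-\pi,\pi]$ and let $\Omega\subset\mathbb{C}$ be a neighbourhood of the point $\mathrm{e}^{\mathrm{i}\theta}$. For $r\in(0,1)$ let $$\Omega_{r,\theta}:=\left\{\lambda\in\mathbb{C}:\left|\lambda-\mathrm{e}^{\mathrm{i}\theta}\frac{1+r^2}{1-r^2}\right|\leq\frac{2r}{1-r^2}\right\}.$$ Then there exists a constant $C>0$ with the following property: if $r\in(0,\tfrac14)$ is such that $\Omega_{2r,\theta}\subset\Omega$, and if $F:\Omega\to X$ is a holomorphic function such that, for some constant $B>0$, $\|F(\lambda)\|\leq B\,|1-|\lambda||^{-1}$ for all $\lambda\in\partial\Omega_{2r,\theta}\setminus\mathbb{T}$, then $\|F(\lambda)\|\leq BCr^{-1}$ for all $\lambda\in\Omega_{r,\theta}$.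
   Context: $\mathbb{T}$ is the unit circle and $\partial$ denotes the boundary of a set. *)

theory Defs
  imports "HOL-Analysis.Analysis"
begin

text \<open>A complex Banach space is modelled as a real Banach space (type class banach)
  together with a real-linear map J (multiplication by i) with J (J x) = -x and such that the
  induced complex scalar multiplication is norm-homogeneous.\<close>

definition cscale :: "('a::real_vector \<Rightarrow> 'a) \<Rightarrow> complex \<Rightarrow> 'a \<Rightarrow> 'a" where
  "cscale J c x = Re c *\<^sub>R x + Im c *\<^sub>R J x"

definition complex_structure :: "('a::real_normed_vector \<Rightarrow> 'a) \<Rightarrow> bool" where
  "complex_structure J \<longleftrightarrow> linear J \<and> (\<forall>x. J (J x) = - x) \<and>
     (\<forall>c x. norm (cscale J c x) = cmod c * norm x)"

definition vholomorphic_on ::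
  "('a::real_normed_vector \<Rightarrow> 'a) \<Rightarrow> (complex \<Rightarrow> 'a) \<Rightarrow> complex set \<Rightarrow> bool" where
  "vholomorphic_on J F S \<longleftrightarrow>
     (\<forall>z\<in>S. \<exists>D. (F has_derivative (\<lambda>h. cscale J h D)) (at z within S))"

definition Omega_disc :: "real \<Rightarrow> real \<Rightarrow> complex set" where
  "Omega_disc r \<theta> = cball (cis \<theta> * complex_of_real ((1 + r\<^sup>2) / (1 - r\<^sup>2))) (2 * r / (1 - r\<^sup>2))"

end

theory Submission
  imports Defs "HOL-Complex_Analysis.Complex_Analysis"
begin


definition sublin :: "('a::real_vector \<Rightarrow> real) \<Rightarrow> bool" where
  "sublin q \<longleftrightarrow> (\<forall>x y. q (x + y) \<le> q x + q y) \<and> (\<forall>t x. 0 \<le> t \<longrightarrow> q (t *\<^sub>R x) = t * q x)"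

lemma sublin_0: "sublin q \<Longrightarrow> q 0 = 0"
  unfolding sublin_def by (metis mult_zero_left order_refl scaleR_zero_left)

lemma sublin_neg: "sublin q \<Longrightarrow> - q (- x) \<le> q x"
proof -
  assume s: "sublin q"
  have "q (x + - x) \<le> q x + q (- x)" using s unfolding sublin_def by blast
  thus ?thesis using sublin_0[OF s] by simp
qed

definition rfun :: "('a::real_vector \<Rightarrow> real) \<Rightarrow> 'a \<Rightarrow> 'a \<Rightarrow> real" where
  "rfun q y x = Inf ((\<lambda>t. q (x + t *\<^sub>R y) - t * q y) ` {0..})"

lemma rfun_bdd:
  assumes s: "sublin q"
  shows "bdd_below ((\<lambda>t. q (x + t *\<^sub>R y) - t * q y) ` {0..})"
proof (rule bdd_belowI2[where m="- q (- x)"])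
  fix t :: real assume t: "t \<in> {0..}"
  have "q (t *\<^sub>R y) \<le> q (x + t *\<^sub>R y) + q (- x)"
    using s unfolding sublin_def by (metis add.commute diff_add_cancel diff_conv_add_uminus add_diff_cancel_left')
  moreover have "q (t *\<^sub>R y) = t * q y" using s t unfolding sublin_def by auto
  ultimately show "- q (- x) \<le> q (x + t *\<^sub>R y) - t * q y" by simp
qed

lemma rfun_le_term:
  assumes s: "sublin q" and t: "0 \<le> t"
  shows "rfun q y x \<le> q (x + t *\<^sub>R y) - t * q y"
  unfolding rfun_def using t by (intro cInf_lower rfun_bdd[OF s]) auto

lemma rfun_ge:
  assumes "\<And>t. 0 \<le> t \<Longrightarrow> c \<le> q (x + t *\<^sub>R y) - t * q y"
  shows "c \<le> rfun q y x"
  unfolding rfun_def using assms by (intro cInf_greatest) auto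

lemma rfun_le: "sublin q \<Longrightarrow> rfun q y x \<le> q x"
  using rfun_le_term[of q 0 y x] by simp

lemma rfun_neg: "sublin q \<Longrightarrow> rfun q y (- y) \<le> - q y"
  using rfun_le_term[of q 1 y "- y"] sublin_0[of q] by simp

lemma rfun_sublin:
  assumes s: "sublin q"
  shows "sublin (rfun q y)"
  unfolding sublin_def
proof (intro conjI allI impI)
  fix x1 x2
  have "rfun q y (x1 + x2) - rfun q y x2 \<le> rfun q y x1"
  proof (rule rfun_ge)
    fix t1 :: real assume t1: "0 \<le> t1"
    have "rfun q y (x1 + x2) - q (x1 + t1 *\<^sub>R y) + t1 * q y \<le> rfun q y x2"
    proof (rule rfun_ge)
      fix t2 :: real assume t2: "0 \<le> t2"
      have "rfun q y (x1 + x2) \<le> q ((x1 + x2) + (t1 + t2) *\<^sub>R y) - (t1 + t2) * q y"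
        using rfun_le_term[OF s, of "t1 + t2"] t1 t2 by simp
      also have "(x1 + x2) + (t1 + t2) *\<^sub>R y = (x1 + t1 *\<^sub>R y) + (x2 + t2 *\<^sub>R y)"
        by (simp add: algebra_simps)
      also have "q \<dots> \<le> q (x1 + t1 *\<^sub>R y) + q (x2 + t2 *\<^sub>R y)" using s unfolding sublin_def by blast
      finally show "rfun q y (x1 + x2) - q (x1 + t1 *\<^sub>R y) + t1 * q y \<le> q (x2 + t2 *\<^sub>R y) - t2 * q y"
        by (simp add: algebra_simps)
    qed
    then show "rfun q y (x1 + x2) - rfun q y x2 \<le> q (x1 + t1 *\<^sub>R y) - t1 * q y" by simp
  qed
  then show "rfun q y (x1 + x2) \<le> rfun q y x1 + rfun q y x2" by simp
next
  fix t :: real and x assume t: "0 \<le> t"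
  show "rfun q y (t *\<^sub>R x) = t * rfun q y x"
  proof (cases "t = 0")
    case True
    have "rfun q y 0 \<le> 0" using rfun_le[OF s, of y 0] sublin_0[OF s] by simp
    moreover have "0 \<le> rfun q y 0"
    proof (rule rfun_ge)
      fix u :: real assume "0 \<le> u"
      then show "0 \<le> q (0 + u *\<^sub>R y) - u * q y" using s unfolding sublin_def by simp
    qed
    ultimately show ?thesis using True by simp
  next
    case False
    with t have tp: "0 < t" by simp
    have hom: "\<And>z u. 0 \<le> u \<Longrightarrow> q (u *\<^sub>R z) = u * q z" using s unfolding sublin_def by blast
    have "t * rfun q y x \<le> rfun q y (t *\<^sub>R x)"
    proof (rule rfun_ge)
      fix u :: real assume u: "0 \<le> u"
      have "rfun q y x \<le> q (x + (u / t) *\<^sub>R y) - (u / t) * q y"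
        using rfun_le_term[OF s, of "u/t"] u tp by simp
      hence "t * rfun q y x \<le> t * (q (x + (u / t) *\<^sub>R y) - (u / t) * q y)"
        using tp by (intro mult_left_mono) auto
      also have "\<dots> = t * q (x + (u / t) *\<^sub>R y) - u * q y"
        using tp by (simp add: algebra_simps)
      finally have "t * rfun q y x \<le> t * q (x + (u / t) *\<^sub>R y) - u * q y" .
      also have "t * q (x + (u / t) *\<^sub>R y) = q (t *\<^sub>R x + u *\<^sub>R y)"
        using hom[of t "x + (u / t) *\<^sub>R y"] tp by (simp add: scaleR_add_right)
      finally show "t * rfun q y x \<le> q (t *\<^sub>R x + u *\<^sub>R y) - u * q y" .
    qed
    moreover have "rfun q y (t *\<^sub>R x) \<le> t * rfun q y x"
    proof -
      have "rfun q y (t *\<^sub>R x) / t \<le> rfun q y x"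
      proof (rule rfun_ge)
        fix u :: real assume u: "0 \<le> u"
        have "rfun q y (t *\<^sub>R x) \<le> q (t *\<^sub>R x + (t * u) *\<^sub>R y) - (t * u) * q y"
          using rfun_le_term[OF s, of "t*u"] u tp by simp
        also have "q (t *\<^sub>R x + (t * u) *\<^sub>R y) = t * q (x + u *\<^sub>R y)"
          using hom[of t "x + u *\<^sub>R y"] tp by (simp add: scaleR_add_right)
        finally show "rfun q y (t *\<^sub>R x) / t \<le> q (x + u *\<^sub>R y) - u * q y"
          using tp by (simp add: divide_simps algebra_simps)
      qed
      thus ?thesis using tp by (simp add: divide_simps mult.commute)
    qed
    ultimately show ?thesis by simp
  qed
qed

lemma min_sublin_linear:
  assumes s: "sublin m" and mn: "\<And>q. sublin q \<Longrightarrow> (\<forall>x. q x \<le> m x) \<Longrightarrow> q = m"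
  shows "linear m"
proof -
  have odd: "m (- y) = - m y" for y
  proof -
    have "rfun m y = m" using mn[OF rfun_sublin[OF s]] rfun_le[OF s] by blast
    hence "m (- y) \<le> - m y" using rfun_neg[OF s, of y] by simp
    moreover have "- m (- y) \<le> m y" using sublin_neg[OF s] .
    ultimately show ?thesis by simp
  qed
  have sub: "m (x + y) \<le> m x + m y" for x y using s unfolding sublin_def by blast
  have add: "m (x + y) = m x + m y" for x y
  proof -
    have "m x = m ((x + y) + - y)" by simp
    also have "\<dots> \<le> m (x + y) + m (- y)" by (rule sub)
    finally show ?thesis using sub[of x y] odd[of y] by simp
  qed
  have sc: "m (t *\<^sub>R x) = t * m x" for t x
  proof (cases "0 \<le> t")
    case True then show ?thesis using s unfolding sublin_def by blast
  next
    case False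
    have "m (t *\<^sub>R x) = - m ((- t) *\<^sub>R x)" using odd[of "(- t) *\<^sub>R x"] by simp
    also have "m ((- t) *\<^sub>R x) = (- t) * m x" using s False unfolding sublin_def by (metis linorder_le_cases neg_0_le_iff_le)
    finally show ?thesis by simp
  qed
  show ?thesis by (rule linearI) (simp_all add: add sc)
qed

lemma norm_sublin: "sublin (norm :: 'a::real_normed_vector \<Rightarrow> real)"
  unfolding sublin_def by (simp add: norm_triangle_ineq)

lemma hahn_banach_norm:
  fixes x0 :: "'a::real_normed_vector"
  shows "\<exists>l. linear l \<and> (\<forall>x. l x \<le> norm x) \<and> l x0 = norm x0"
proof -
  define p0 where "p0 = rfun (norm :: 'a \<Rightarrow> real) x0"
  have p0s: "sublin p0" unfolding p0_def by (rule rfun_sublin[OF norm_sublin])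
  define A where "A = {q. sublin q \<and> (\<forall>x. q x \<le> p0 x)}"
  define P where "P = (\<lambda>a b :: 'a \<Rightarrow> real. \<forall>x. b x \<le> a x)"
  have po: "partial_order_on A (relation_of P A)"
    by (rule partial_order_on_relation_ofI) (auto simp: P_def intro: order_trans, rule ext, meson antisym)
  have ch: "\<exists>u \<in> A. \<forall>a \<in> C. P a u" if C: "C \<in> Chains (relation_of P A)" for C
  proof (cases "C = {}")
    case True
    then show ?thesis using p0s by (auto simp: A_def)
  next
    case False
    have CA: "C \<subseteq> A" and tot: "\<And>a b. a \<in> C \<Longrightarrow> b \<in> C \<Longrightarrow> P a b \<or> P b a"
      using C unfolding Chains_def relation_of_def by auto
    define u where "u = (\<lambda>x. Inf ((\<lambda>q. q x) ` C))"
    have lb: "- norm x \<le> q x" if "q \<in> C" for q x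
    proof -
      have sq: "sublin q" and qp: "\<And>x. q x \<le> p0 x" using that CA by (auto simp: A_def)
      have "q (- x) \<le> norm (- x)" using qp[of "- x"] rfun_le[OF norm_sublin, of x0 "- x"]
        by (simp add: p0_def)
      then show ?thesis using sublin_neg[OF sq, of x] by simp
    qed
    have bdd: "bdd_below ((\<lambda>q. q x) ` C)" for x
      by (rule bdd_belowI2[where m="- norm x"]) (rule lb)
    have ule: "u x \<le> q x" if "q \<in> C" for q x
      unfolding u_def using that bdd by (intro cInf_lower) auto
    have uge: "c \<le> u x" if "\<And>q. q \<in> C \<Longrightarrow> c \<le> q x" for c x
      unfolding u_def using that False by (intro cInf_greatest) auto
    have hom: "\<And>q t z. q \<in> C \<Longrightarrow> 0 \<le> t \<Longrightarrow> q (t *\<^sub>R z) = t * q z"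
      using CA by (auto simp: A_def sublin_def)
    have us: "sublin u"
      unfolding sublin_def
    proof (intro conjI allI impI)
      fix x y
      have "u (x + y) - u y \<le> u x"
      proof (rule uge)
        fix q1 assume q1: "q1 \<in> C"
        have "u (x + y) - q1 x \<le> u y"
        proof (rule uge)
          fix q2 assume q2: "q2 \<in> C"
          from tot[OF q1 q2] show "u (x + y) - q1 x \<le> q2 y"
          proof
            assume "P q1 q2"
            hence "u (x + y) \<le> q2 (x + y)" "q2 x \<le> q1 x" using ule[OF q2] by (auto simp: P_def)
            moreover have "q2 (x + y) \<le> q2 x + q2 y" using q2 CA by (auto simp: A_def sublin_def)
            ultimately show ?thesis by simp
          next
            assume "P q2 q1"
            hence "u (x + y) \<le> q1 (x + y)" "q1 y \<le> q2 y" using ule[OF q1] by (auto simp: P_def)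
            moreover have "q1 (x + y) \<le> q1 x + q1 y" using q1 CA by (auto simp: A_def sublin_def)
            ultimately show ?thesis by simp
          qed
        qed
        thus "u (x + y) - u y \<le> q1 x" by simp
      qed
      thus "u (x + y) \<le> u x + u y" by simp
    next
      fix t :: real and x assume t: "0 \<le> t"
      show "u (t *\<^sub>R x) = t * u x"
      proof (cases "t = 0")
        case True
        obtain q where "q \<in> C" using False by blast
        have "u 0 = 0"
        proof (rule antisym)
          show "u 0 \<le> 0" using ule[OF \<open>q \<in> C\<close>, of 0] hom[OF \<open>q \<in> C\<close>, of 0 0] by simp
          show "0 \<le> u 0" by (rule uge) (use hom in \<open>metis scaleR_zero_left mult_zero_left order_refl\<close>)
        qed
        then show ?thesis using True by simp
      next
        case False
        with t have tp: "0 < t" by simp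
        have "u (t *\<^sub>R x) = Inf ((\<lambda>q. t * q x) ` C)"
          unfolding u_def using hom tp by (intro arg_cong[where f=Inf]) (auto intro!: image_cong)
        also have "\<dots> = t * u x"
        proof (rule antisym)
          show "Inf ((\<lambda>q. t * q x) ` C) \<le> t * u x"
          proof -
            have "Inf ((\<lambda>q. t * q x) ` C) / t \<le> u x"
            proof (rule uge)
              fix q assume q: "q \<in> C"
              have "bdd_below ((\<lambda>q. t * q x) ` C)"
                by (rule bdd_belowI2[where m="t * - norm x"]) (rule mult_left_mono[OF lb less_imp_le[OF tp]])
              hence "Inf ((\<lambda>q. t * q x) ` C) \<le> t * q x" using q by (intro cInf_lower) auto
              thus "Inf ((\<lambda>q. t * q x) ` C) / t \<le> q x" using tp by (simp add: divide_simps mult.commute)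
            qed
            thus ?thesis using tp by (simp add: divide_simps mult.commute)
          qed
          show "t * u x \<le> Inf ((\<lambda>q. t * q x) ` C)"
            using False \<open>C \<noteq> {}\<close> ule tp by (intro cInf_greatest) (auto intro: mult_left_mono)
        qed
        finally show ?thesis .
      qed
    qed
    have "u \<in> A"
    proof -
      obtain q where q: "q \<in> C" using False by blast
      hence "\<forall>x. q x \<le> p0 x" using CA by (auto simp: A_def)
      thus ?thesis using us ule[OF q] by (auto simp: A_def intro: order_trans)
    qed
    moreover have "\<forall>a \<in> C. P a u" using ule by (auto simp: P_def)
    ultimately show ?thesis by blast
  qed
  obtain m where mA: "m \<in> A" and mmax: "\<And>a. a \<in> A \<Longrightarrow> P m a \<Longrightarrow> a = m"
    using predicate_Zorn[OF po ch] by blast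
  have ms: "sublin m" and mp: "\<And>x. m x \<le> p0 x" using mA by (auto simp: A_def)
  have lin: "linear m"
  proof (rule min_sublin_linear[OF ms])
    fix q assume "sublin q" "\<forall>x. q x \<le> m x"
    then show "q = m" using mmax mp by (simp add: A_def P_def) (meson order_trans)
  qed
  have le: "m x \<le> norm x" for x using mp[of x] rfun_le[OF norm_sublin, of x0 x] by (simp add: p0_def)
  have "m (- x0) \<le> - norm x0" using mp[of "- x0"] rfun_neg[OF norm_sublin, of x0] by (simp add: p0_def)
  moreover have "m (- x0) = - m x0" using linear_neg[OF lin] by simp
  ultimately have "m x0 = norm x0" using le[of x0] by simp
  thus ?thesis using lin le by blast
qed




lemma scalar_core:
  fixes k :: "complex \<Rightarrow> complex" and s B :: real
  assumes s: "0 < s" and hol: "k holomorphic_on U" and U: "open U" and sub: "cball 0 s \<subseteq> U"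
    and B: "0 \<le> B"
    and bd: "\<And>\<zeta>. cmod \<zeta> = s \<Longrightarrow> Re \<zeta> \<noteq> 0 \<Longrightarrow> cmod (k \<zeta>) \<le> B / \<bar>Re \<zeta>\<bar>"
    and z: "cmod z \<le> s / 2"
  shows "cmod (k z) \<le> 8 * B / (3 * s)"
proof -
  define h where "h = (\<lambda>\<zeta>. (\<zeta>^2 + (of_real s)^2) * k \<zeta>)"
  have holh: "h holomorphic_on U" unfolding h_def by (intro holomorphic_intros hol)
  have hb: "cmod (h \<zeta>) \<le> 2 * B * s" if "\<zeta> \<in> sphere 0 s" for \<zeta>
  proof -
    have n: "cmod \<zeta> = s" using that by simp
    have id: "\<zeta>^2 + (of_real s)^2 = 2 * of_real (Re \<zeta>) * \<zeta>"
    proof -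
      have "(of_real s :: complex)^2 = \<zeta> * cnj \<zeta>" using n
        using complex_norm_square[of \<zeta>] by simp
      then have "\<zeta>^2 + (of_real s)^2 = \<zeta> * \<zeta> + \<zeta> * cnj \<zeta>"
        by (simp add: power2_eq_square)
      also have "\<dots> = \<zeta> * (\<zeta> + cnj \<zeta>)" by (rule distrib_left[symmetric])
      also have "\<dots> = 2 * of_real (Re \<zeta>) * \<zeta>" unfolding complex_add_cnj by simp
      finally show ?thesis .
    qed
    show ?thesis
    proof (cases "Re \<zeta> = 0")
      case True
      have "h \<zeta> = 0" unfolding h_def id using True by simp
      then show ?thesis using B s by simp
    next
      case False
      have "cmod (h \<zeta>) = cmod (2 * of_real (Re \<zeta>) * \<zeta> * k \<zeta>)"
        unfolding h_def id ..
      also have "\<dots> = 2 * \<bar>Re \<zeta>\<bar> * s * cmod (k \<zeta>)"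
        using n by (simp only: norm_mult norm_of_real) simp
      also have "\<dots> \<le> 2 * \<bar>Re \<zeta>\<bar> * s * (B / \<bar>Re \<zeta>\<bar>)"
        using bd[OF n False] s by (intro mult_left_mono) auto
      also have "\<dots> = 2 * B * s" using False by simp
      finally show ?thesis .
    qed
  qed
  have m1: "h holomorphic_on interior (cball 0 s)"
    using holh sub ball_subset_cball by (metis holomorphic_on_subset interior_cball subset_trans)
  have m2: "continuous_on (closure (cball 0 s)) h"
    using holh sub by (metis closure_closed closed_cball holomorphic_on_imp_continuous_on holomorphic_on_subset)
  have m3: "bounded (cball (0::complex) s)" by simp
  have m4: "cmod (h w) \<le> 2 * B * s" if "w \<in> frontier (cball 0 s)" for w
    using hb that s by (simp add: frontier_cball)
  have m5: "z \<in> cball 0 s" using z s by simp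
  have "cmod (h z) \<le> 2 * B * s"
    using maximum_modulus_frontier[where f=h and S="cball 0 s" and B="2 * B * s" and \<xi>=z] m1 m2 m3 m4 m5 by blast
  moreover have low: "3 * s^2 / 4 \<le> cmod (z^2 + (of_real s)^2)"
  proof -
    have "cmod ((of_real s)^2) - cmod (z^2) \<le> cmod (z^2 + (of_real s)^2)"
      by (metis add.commute norm_diff_ineq)
    moreover have "cmod (z^2) \<le> s^2 / 4"
    proof -
      have "cmod z ^ 2 \<le> (s/2)^2" using z by (intro power_mono) auto
      thus ?thesis by (simp add: norm_power power_divide)
    qed
    ultimately show ?thesis using s by (simp add: norm_power)
  qed
  ultimately have "cmod (z^2 + (of_real s)^2) * cmod (k z) \<le> 2 * B * s" by (simp add: h_def norm_mult)
  hence "3 * s^2 / 4 * cmod (k z) \<le> 2 * B * s"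
    using low by (meson mult_right_mono norm_ge_zero order_trans)
  thus ?thesis using s by (simp add: field_simps power2_eq_square)
qed


lemma disc_ident:
  fixes l :: complex and s :: real
  assumes "s^2 \<noteq> 1"
  shows "(cmod (l - 1))^2 - s^2 * (cmod (l + 1))^2 =
    (1 - s^2) * ((cmod (l - of_real ((1+s^2)/(1-s^2))))^2 - (2 * s/(1-s^2))^2)"
proof -
  have d: "1 - s^2 \<noteq> 0" using assms by simp
  define c where "c = (1+s^2)/(1-s^2)"
  define r where "r = 2 * s/(1-s^2)"
  have c1: "(1 - s^2) * c = 1 + s^2" unfolding c_def using d by simp
  have c2: "c^2 - r^2 = 1"
  proof -
    have "c^2 - r^2 = ((1+s^2)^2 - (2 * s)^2) / (1-s^2)^2"
      unfolding c_def r_def by (simp add: power_divide diff_divide_distrib)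
    also have "(1+s^2)^2 - (2 * s)^2 = (1-s^2)^2" by (simp add: power2_eq_square algebra_simps)
    finally show ?thesis using d by simp
  qed
  obtain x y where l: "l = Complex x y" by (cases l)
  have A: "(cmod (l - 1))^2 = (x - 1)^2 + y^2" unfolding l cmod_power2 by simp
  have B: "(cmod (l + 1))^2 = (x + 1)^2 + y^2" unfolding l cmod_power2 by simp
  have C: "(cmod (l - of_real c))^2 = (x - c)^2 + y^2" unfolding l cmod_power2 by simp
  have "(1 - s^2) * ((x - c)^2 + y^2 - r^2) = (1 - s^2) * (x^2 + y^2) - 2 * x * ((1 - s^2) * c) + (1 - s^2) * (c^2 - r^2)"
    by (simp add: power2_eq_square algebra_simps)
  also have "\<dots> = (x - 1)^2 + y^2 - s^2 * ((x + 1)^2 + y^2)" unfolding c1 c2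
    by (simp add: power2_eq_square algebra_simps)
  finally have eq: "(1 - s^2) * ((x - c)^2 + y^2 - r^2) = (x - 1)^2 + y^2 - s^2 * ((x + 1)^2 + y^2)" .
  have "(cmod (l - 1))^2 - s^2 * (cmod (l + 1))^2 = (1 - s^2) * ((cmod (l - of_real c))^2 - r^2)"
    unfolding A B C using eq by simp
  thus ?thesis by (simp add: c_def r_def)
qed


lemma disc_le_iff:
  fixes l :: complex and s :: real
  assumes "0 \<le> s" "s < 1"
  shows "cmod (l - of_real ((1+s^2)/(1-s^2))) \<le> 2 * s/(1-s^2) \<longleftrightarrow> cmod (l - 1) \<le> s * cmod (l + 1)"
proof -
  have s2: "s^2 < 1" using assms by (simp add: power_less_one_iff)
  have p: "0 < 1 - s^2" using s2 by simp
  have rho: "0 \<le> 2 * s/(1-s^2)" using assms p by simp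
  have e: "(cmod (l - 1))^2 - s^2 * (cmod (l + 1))^2 = (1 - s^2) * ((cmod (l - of_real ((1+s^2)/(1-s^2))))^2 - (2 * s/(1-s^2))^2)"
    using disc_ident s2 by simp
  have "cmod (l - of_real ((1+s^2)/(1-s^2))) \<le> 2 * s/(1-s^2) \<longleftrightarrow>
        (cmod (l - of_real ((1+s^2)/(1-s^2))))^2 \<le> (2 * s/(1-s^2))^2"
    using rho by (simp add: power2_le_iff_abs_le abs_of_nonneg)
  also have "\<dots> \<longleftrightarrow> (cmod (l - 1))^2 \<le> s^2 * (cmod (l + 1))^2"
  proof -
    have "(1 - s^2) * ((cmod (l - of_real ((1+s^2)/(1-s^2))))^2 - (2 * s/(1-s^2))^2) \<le> 0 \<longleftrightarrow>
       (cmod (l - of_real ((1+s^2)/(1-s^2))))^2 - (2 * s/(1-s^2))^2 \<le> 0"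
      using p by (simp add: mult_le_0_iff)
    thus ?thesis unfolding e[symmetric] by linarith
  qed
  also have "\<dots> \<longleftrightarrow> (cmod (l - 1))^2 \<le> (s * cmod (l + 1))^2" by (simp add: power_mult_distrib)
  also have "\<dots> \<longleftrightarrow> cmod (l - 1) \<le> s * cmod (l + 1)"
    using assms by (simp add: power2_le_iff_abs_le abs_of_nonneg)
  finally show ?thesis .
qed


lemma disc_eq_iff:
  fixes l :: complex and s :: real
  assumes "0 \<le> s" "s < 1"
  shows "cmod (l - of_real ((1+s^2)/(1-s^2))) = 2 * s/(1-s^2) \<longleftrightarrow> cmod (l - 1) = s * cmod (l + 1)"
proof -
  have s2: "s^2 < 1" using assms by (simp add: power_less_one_iff)
  have p: "0 < 1 - s^2" using s2 by simp
  have rho: "0 \<le> 2 * s/(1-s^2)" using assms p by simp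
  have e: "(cmod (l - 1))^2 - s^2 * (cmod (l + 1))^2 = (1 - s^2) * ((cmod (l - of_real ((1+s^2)/(1-s^2))))^2 - (2 * s/(1-s^2))^2)"
    using disc_ident s2 by simp
  have "cmod (l - of_real ((1+s^2)/(1-s^2))) = 2 * s/(1-s^2) \<longleftrightarrow>
        (cmod (l - of_real ((1+s^2)/(1-s^2))))^2 = (2 * s/(1-s^2))^2"
    using rho by (metis norm_ge_zero power2_eq_iff_nonneg)
  also have "\<dots> \<longleftrightarrow> (cmod (l - 1))^2 = s^2 * (cmod (l + 1))^2"
  proof -
    have "(1 - s^2) * ((cmod (l - of_real ((1+s^2)/(1-s^2))))^2 - (2 * s/(1-s^2))^2) = 0 \<longleftrightarrow>
       (cmod (l - of_real ((1+s^2)/(1-s^2))))^2 - (2 * s/(1-s^2))^2 = 0"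
      using p by simp
    thus ?thesis unfolding e[symmetric] by linarith
  qed
  also have "\<dots> \<longleftrightarrow> (cmod (l - 1))^2 = (s * cmod (l + 1))^2" by (simp add: power_mult_distrib)
  also have "\<dots> \<longleftrightarrow> cmod (l - 1) = s * cmod (l + 1)"
    using assms by (metis norm_ge_zero power2_eq_iff_nonneg zero_le_mult_iff)
  finally show ?thesis .
qed



lemma mob1:
  fixes z :: complex
  assumes "z \<noteq> 1"
  shows "cmod ((1 + z) / (1 - z) - 1) = cmod z * cmod ((1 + z) / (1 - z) + 1)"
proof -
  have d: "1 - z \<noteq> 0" using assms by simp
  have "(1 + z) / (1 - z) - 1 = 2 * z / (1 - z)" using d by (simp add: field_simps)
  moreover have "(1 + z) / (1 - z) + 1 = 2 / (1 - z)" using d by (simp add: field_simps)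
  ultimately show ?thesis by (simp add: norm_mult norm_divide)
qed



lemma mob2:
  fixes l :: complex
  assumes "l \<noteq> -1"
  shows "(l - 1) / (l + 1) \<noteq> 1" "(1 + (l - 1) / (l + 1)) / (1 - (l - 1) / (l + 1)) = l"
    "cmod ((l - 1) / (l + 1)) * cmod (l + 1) = cmod (l - 1)"
proof -
  have d: "l + 1 \<noteq> 0" proof
    assume "l + 1 = 0" hence "l = -1" by (metis add_diff_cancel_right' diff_0)
    thus False using assms by simp
  qed
  show "(l - 1) / (l + 1) \<noteq> 1"
  proof
    assume "(l - 1) / (l + 1) = 1"
    hence "l - 1 = l + 1" using d by (simp only: divide_eq_1_iff)
    thus False by simp
  qed
  have dd: "(l + 1) / (l + 1) = 1" using d by simp
  have e1: "1 + (l - 1) / (l + 1) = 2 * l / (l + 1)"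
  proof -
    have "((l + 1) + (l - 1)) / (l + 1) = (l + 1) / (l + 1) + (l - 1) / (l + 1)" by (rule add_divide_distrib)
    moreover have "(l + 1) + (l - 1) = 2 * l" by (simp add: algebra_simps)
    ultimately show ?thesis unfolding dd by simp
  qed
  have e2: "1 - (l - 1) / (l + 1) = 2 / (l + 1)"
  proof -
    have "((l + 1) - (l - 1)) / (l + 1) = (l + 1) / (l + 1) - (l - 1) / (l + 1)" by (rule diff_divide_distrib)
    moreover have "(l + 1) - (l - 1) = 2" by simp
    ultimately show ?thesis unfolding dd by simp
  qed
  show "(1 + (l - 1) / (l + 1)) / (1 - (l - 1) / (l + 1)) = l" unfolding e1 e2 using d by (simp add: divide_divide_eq_left)
  show "cmod ((l - 1) / (l + 1)) * cmod (l + 1) = cmod (l - 1)" using d by (simp add: norm_divide)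
qed



lemma mob_modulus:
  fixes z :: complex
  assumes "cmod z \<le> 1/2"
  shows "4/9 * \<bar>Re z\<bar> \<le> \<bar>1 - cmod ((1 + z) / (1 - z))\<bar>"
proof -
  have z1: "z \<noteq> 1" using assms by auto
  define d where "d = cmod (1 - z)"
  define a where "a = cmod ((1 + z) / (1 - z))"
  have dlo: "1/2 \<le> d" unfolding d_def using norm_triangle_ineq2[of 1 z] assms by simp
  have dhi: "d \<le> 3/2" unfolding d_def using norm_triangle_ineq4[of 1 z] assms by simp
  have nhi: "cmod (1 + z) \<le> 3/2" using norm_triangle_ineq[of 1 z] assms by simp
  have a: "a = cmod (1 + z) / d" unfolding a_def d_def by (simp add: norm_divide)
  have a0: "0 \<le> a" unfolding a_def by simp
  have ahi: "a \<le> 3" unfolding a using dlo nhi by (simp add: divide_simps)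
  have key: "(cmod (1 + z))^2 - d^2 = 4 * Re z" unfolding d_def cmod_power2
    by (simp add: power2_eq_square algebra_simps)
  have "a^2 - 1 = ((cmod (1 + z))^2 - d^2) / d^2" unfolding a using dlo
    by (simp add: power_divide diff_divide_distrib)
  hence "a^2 - 1 = 4 * Re z / d^2" unfolding key .
  moreover have "\<bar>1 - a\<bar> * (1 + a) = \<bar>(1 - a) * (1 + a)\<bar>" using a0 by (simp add: abs_mult)
  moreover have "(1 - a) * (1 + a) = - (a^2 - 1)" by (simp add: power2_eq_square algebra_simps)
  ultimately have "\<bar>1 - a\<bar> * (1 + a) = \<bar>4 * Re z / d^2\<bar>" by simp
  hence "\<bar>1 - a\<bar> * (1 + a) = 4 * \<bar>Re z\<bar> / d^2" by (simp add: abs_divide abs_mult)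
  moreover have "d^2 \<le> 9/4"
  proof -
    have "d^2 \<le> (3/2)^2" using dhi dlo by (intro power_mono) auto
    thus ?thesis by (simp add: power2_eq_square)
  qed
  ultimately have "4 * \<bar>Re z\<bar> / (9/4) \<le> \<bar>1 - a\<bar> * (1 + a)"
  proof -
    assume e: "\<bar>1 - a\<bar> * (1 + a) = 4 * \<bar>Re z\<bar> / d^2" and dd: "d^2 \<le> 9/4"
    have "0 < d^2" using dlo by simp
    hence "4 * \<bar>Re z\<bar> / (9/4) \<le> 4 * \<bar>Re z\<bar> / d^2" using dd
      by (intro divide_left_mono) auto
    thus ?thesis using e by simp
  qed
  also have "\<dots> \<le> \<bar>1 - a\<bar> * 4" by (rule mult_left_mono) (use ahi in auto)
  finally have "4 * \<bar>Re z\<bar> / (9/4) \<le> \<bar>1 - a\<bar> * 4" .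
  moreover have "4 * \<bar>Re z\<bar> / (9/4) = 4 * (4/9 * \<bar>Re z\<bar>)" by simp
  ultimately have "4 * (4/9 * \<bar>Re z\<bar>) \<le> 4 * \<bar>1 - a\<bar>" by (simp only: mult.commute)
  hence "4/9 * \<bar>Re z\<bar> \<le> \<bar>1 - a\<bar>" by (rule mult_left_le_imp_le) simp
  thus ?thesis unfolding a_def .
qed



lemma cfun:
  fixes J :: "'a::real_normed_vector \<Rightarrow> 'a" and x0 :: 'a
  assumes cs: "complex_structure J"
  shows "\<exists>\<phi> :: 'a \<Rightarrow> complex. bounded_linear \<phi> \<and> (\<forall>c x. \<phi> (cscale J c x) = c * \<phi> x) \<and>
           (\<forall>x. cmod (\<phi> x) \<le> norm x) \<and> cmod (\<phi> x0) = norm x0"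
proof -
  obtain l where lin: "linear l" and le: "\<And>x. l x \<le> norm x" and lx0: "l x0 = norm x0"
    using hahn_banach_norm[of x0] by blast
  have linJ: "linear J" and JJ: "\<And>x. J (J x) = - x"
    and nJ: "\<And>c x. norm (cscale J c x) = cmod c * norm x"
    using cs unfolding complex_structure_def by auto
  define \<phi> where "\<phi> x = Complex (l x) (- l (J x))" for x
  have Re\<phi>: "Re (\<phi> x) = l x" for x by (simp add: \<phi>_def)
  have hom: "\<phi> (cscale J c x) = c * \<phi> x" for c x
  proof -
    have e1: "l (cscale J c x) = Re c * l x + Im c * l (J x)"
      unfolding cscale_def using lin by (simp add: linear_add linear_scale)
    have "J (cscale J c x) = Re c *\<^sub>R J x - Im c *\<^sub>R x"
      unfolding cscale_def using linJ JJ by (simp add: linear_add linear_scale)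
    hence e2: "l (J (cscale J c x)) = Re c * l (J x) - Im c * l x"
      using lin by (simp add: linear_diff linear_scale)
    show ?thesis unfolding complex_eq_iff using e1 e2 by (simp add: \<phi>_def algebra_simps)
  qed
  have add: "\<phi> (x + y) = \<phi> x + \<phi> y" for x y
    unfolding \<phi>_def using lin linJ by (simp add: linear_add complex_eq_iff)
  have sc: "\<phi> (r *\<^sub>R x) = r *\<^sub>R \<phi> x" for r x
  proof -
    have "cscale J (of_real r) x = r *\<^sub>R x" by (simp add: cscale_def)
    hence "\<phi> (r *\<^sub>R x) = of_real r * \<phi> x" using hom[of "of_real r" x] by simp
    thus ?thesis by (simp add: scaleR_conv_of_real)
  qed
  have nb: "cmod (\<phi> x) \<le> norm x" for x
  proof (cases "\<phi> x = 0")
    case True then show ?thesis by simp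
  next
    case False
    define u where "u = cnj (\<phi> x) / of_real (cmod (\<phi> x))"
    have cu: "cmod u = 1" using False by (simp add: u_def norm_divide)
    define c where "c = cmod (\<phi> x)"
    have c0: "c \<noteq> 0" using False by (simp add: c_def)
    have h1: "cnj (\<phi> x) * \<phi> x = of_real c * of_real c"
      using complex_norm_square[of "\<phi> x"] unfolding c_def by (simp add: power2_eq_square mult.commute)
    have "u * \<phi> x = (cnj (\<phi> x) * \<phi> x) / of_real c" unfolding u_def c_def by simp
    also have "\<dots> = of_real c" unfolding h1 using c0 by simp
    finally have "u * \<phi> x = of_real (cmod (\<phi> x))" unfolding c_def .
    hence "cmod (\<phi> x) = Re (\<phi> (cscale J u x))" by (simp add: hom)
    also have "\<dots> = l (cscale J u x)" by (rule Re\<phi>)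
    also have "\<dots> \<le> norm (cscale J u x)" by (rule le)
    also have "\<dots> = norm x" using nJ cu by simp
    finally show ?thesis .
  qed
  have bl: "bounded_linear \<phi>"
    by (rule bounded_linear_intro[where K=1]) (use add sc nb in auto)
  have "norm x0 \<le> cmod (\<phi> x0)" using abs_Re_le_cmod[of "\<phi> x0"] Re\<phi>[of x0] lx0 by simp
  hence "cmod (\<phi> x0) = norm x0" using nb[of x0] by simp
  thus ?thesis using bl hom nb by blast
qed

lemma vhol_scalar:
  fixes J :: "'a::real_normed_vector \<Rightarrow> 'a"
  assumes vh: "vholomorphic_on J F S" and S: "open S"
    and bl: "bounded_linear \<phi>" and hom: "\<And>c x. \<phi> (cscale J c x) = c * \<phi> x"
  shows "(\<lambda>z. \<phi> (F z)) holomorphic_on S"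
  unfolding holomorphic_on_def
proof
  fix z assume z: "z \<in> S"
  obtain D where D: "(F has_derivative (\<lambda>h. cscale J h D)) (at z within S)"
    using vh z unfolding vholomorphic_on_def by blast
  have "((\<lambda>z. \<phi> (F z)) has_derivative (\<lambda>h. \<phi> (cscale J h D))) (at z within S)"
    by (rule bounded_linear.has_derivative[OF bl D])
  moreover have "(\<lambda>h. \<phi> (cscale J h D)) = (*) (\<phi> D)" by (rule ext) (simp add: hom mult.commute)
  ultimately have "((\<lambda>z. \<phi> (F z)) has_field_derivative \<phi> D) (at z within S)"
    by (simp add: has_field_derivative_def)
  thus "(\<lambda>z. \<phi> (F z)) field_differentiable (at z within S)"
    unfolding field_differentiable_def by blast
qed

lemma rot_dist: "dist (cis t * a) (cis t * b) = cmod (b - a)"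
proof -
  have "dist (cis t * a) (cis t * b) = cmod (cis t * (a - b))" by (simp add: dist_norm algebra_simps)
  also have "\<dots> = cmod (b - a)" by (simp add: norm_mult norm_minus_commute)
  finally show ?thesis .
qed

theorem lemma3p3:
  fixes J :: "'a::banach \<Rightarrow> 'a" and \<theta> :: real and \<Omega> :: "complex set"
  assumes "complex_structure J"
    and "- pi < \<theta>" and "\<theta> \<le> pi"
    and "open \<Omega>" and "cis \<theta> \<in> \<Omega>"
  shows "\<exists>C>0. \<forall>(r::real) (F::complex \<Rightarrow> 'a) (B::real).
           0 < r \<and> r < 1/4 \<and> Omega_disc (2 * r) \<theta> \<subseteq> \<Omega> \<and>
           vholomorphic_on J F \<Omega> \<and> 0 < B \<and>
           (\<forall>z \<in> frontier (Omega_disc (2 * r) \<theta>) - sphere 0 1.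
               norm (F z) \<le> B / \<bar>1 - cmod z\<bar>)
           \<longrightarrow> (\<forall>z \<in> Omega_disc r \<theta>. norm (F z) \<le> B * C / r)"
proof -
  have main: "norm (F z) \<le> B * 3 / r"
    if r0: "0 < r" and r4: "r < 1/4" and sub: "Omega_disc (2 * r) \<theta> \<subseteq> \<Omega>"
      and vh: "vholomorphic_on J F \<Omega>" and B0: "0 < B"
      and bd: "\<forall>z \<in> frontier (Omega_disc (2 * r) \<theta>) - sphere 0 1. norm (F z) \<le> B / \<bar>1 - cmod z\<bar>"
      and zin: "z \<in> Omega_disc r \<theta>"
    for r :: real and F :: "complex \<Rightarrow> 'a" and B :: real and z :: complex
  proof -
    define s where "s = 2 * r"
    have s0: "0 < s" and s2: "s < 1/2" using r0 r4 by (auto simp: s_def)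
    obtain \<phi> :: "'a \<Rightarrow> complex" where bl: "bounded_linear \<phi>"
      and hom: "\<And>c x. \<phi> (cscale J c x) = c * \<phi> x" and nb: "\<And>x. cmod (\<phi> x) \<le> norm x"
      and eq: "cmod (\<phi> (F z)) = norm (F z)"
      using cfun[OF assms(1), of "F z"] by blast
    define f where "f = (\<lambda>w. \<phi> (F w))"
    have holf: "f holomorphic_on \<Omega>" unfolding f_def by (rule vhol_scalar[OF vh assms(4) bl hom])
    define M where "M = (\<lambda>\<zeta>::complex. cis \<theta> * ((1 + \<zeta>) / (1 - \<zeta>)))"
    define k where "k = f \<circ> M"
    define U where "U = ball 0 1 \<inter> M -` \<Omega>"
    have ne1: "1 - \<zeta> \<noteq> 0" if "\<zeta> \<in> ball 0 1" for \<zeta> :: complex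
      using that by auto
    have contM: "continuous_on (ball 0 1) M" unfolding M_def
      by (intro continuous_intros) (use ne1 in auto)
    have openU: "open U" unfolding U_def by (rule continuous_open_preimage[OF contM open_ball assms(4)])
    have holM: "M holomorphic_on U" unfolding M_def
      by (intro holomorphic_intros) (use ne1 in \<open>auto simp: U_def\<close>)
    have holk: "k holomorphic_on U" unfolding k_def
      by (rule holomorphic_on_compose[OF holM], rule holomorphic_on_subset[OF holf]) (auto simp: U_def)
    have inD: "M \<zeta> \<in> Omega_disc s \<theta>" if "cmod \<zeta> \<le> s" for \<zeta>
    proof -
      have z1: "\<zeta> \<noteq> 1" using that s2 by auto
      define l where "l = (1 + \<zeta>) / (1 - \<zeta>)"
      have "cmod (l - 1) = cmod \<zeta> * cmod (l + 1)" unfolding l_def by (rule mob1[OF z1])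
      also have "\<dots> \<le> s * cmod (l + 1)" using that by (intro mult_right_mono) auto
      finally have "cmod (l - of_real ((1+s^2)/(1-s^2))) \<le> 2 * s/(1-s^2)"
        using disc_le_iff[of s l] s0 s2 by simp
      thus ?thesis unfolding Omega_disc_def M_def l_def[symmetric] mem_cball rot_dist .
    qed
    have sub2: "cball 0 s \<subseteq> U"
    proof
      fix \<zeta> assume "\<zeta> \<in> cball (0::complex) s"
      hence n: "cmod \<zeta> \<le> s" by simp
      hence "\<zeta> \<in> ball 0 1" using s2 by simp
      moreover have "M \<zeta> \<in> \<Omega>" using inD[OF n] sub by (auto simp: s_def)
      ultimately show "\<zeta> \<in> U" by (simp add: U_def)
    qed
    have bdk: "cmod (k \<zeta>) \<le> (9/4 * B) / \<bar>Re \<zeta>\<bar>" if n: "cmod \<zeta> = s" and re: "Re \<zeta> \<noteq> 0" for \<zeta>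
    proof -
      have z1: "\<zeta> \<noteq> 1" using n s2 by auto
      define l where "l = (1 + \<zeta>) / (1 - \<zeta>)"
      have "cmod (l - 1) = s * cmod (l + 1)" unfolding l_def using mob1[OF z1] n by simp
      hence "cmod (l - of_real ((1+s^2)/(1-s^2))) = 2 * s/(1-s^2)"
        using disc_eq_iff[of s l] s0 s2 by simp
      hence wf: "M \<zeta> \<in> frontier (Omega_disc s \<theta>)"
        unfolding Omega_disc_def frontier_cball M_def l_def[symmetric] mem_sphere rot_dist .
      have mm: "4/9 * \<bar>Re \<zeta>\<bar> \<le> \<bar>1 - cmod l\<bar>" unfolding l_def
        by (rule mob_modulus) (use n s2 in simp)
      have cw: "cmod (M \<zeta>) = cmod l" unfolding M_def l_def by (simp only: norm_mult norm_cis mult_1_left)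
      have pos: "0 < 4/9 * \<bar>Re \<zeta>\<bar>" using re by simp
      hence "cmod (M \<zeta>) \<noteq> 1" using mm cw by auto
      hence "M \<zeta> \<in> frontier (Omega_disc (2 * r) \<theta>) - sphere 0 1" using wf by (simp add: s_def)
      hence "norm (F (M \<zeta>)) \<le> B / \<bar>1 - cmod (M \<zeta>)\<bar>" using bd by blast
      also have "\<dots> \<le> B / (4/9 * \<bar>Re \<zeta>\<bar>)"
      proof (rule divide_left_mono)
        show "4/9 * \<bar>Re \<zeta>\<bar> \<le> \<bar>1 - cmod (M \<zeta>)\<bar>" using mm cw by simp
        show "0 \<le> B" using B0 by simp
        have "0 < \<bar>1 - cmod (M \<zeta>)\<bar>" using mm cw pos by linarith
        thus "0 < \<bar>1 - cmod (M \<zeta>)\<bar> * (4/9 * \<bar>Re \<zeta>\<bar>)" using pos by simp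
      qed
      also have "\<dots> = (9/4 * B) / \<bar>Re \<zeta>\<bar>" by simp
      finally have "norm (F (M \<zeta>)) \<le> (9/4 * B) / \<bar>Re \<zeta>\<bar>" .
      moreover have "cmod (k \<zeta>) \<le> norm (F (M \<zeta>))" unfolding k_def f_def by (simp add: nb)
      ultimately show ?thesis by linarith
    qed
    define l0 where "l0 = cnj (cis \<theta>) * z"
    have zl: "cis \<theta> * l0 = z" unfolding l0_def by (simp add: cis_cnj cis_mult)
    have "dist (cis \<theta> * of_real ((1 + r^2) / (1 - r^2))) (cis \<theta> * l0) \<le> 2 * r / (1 - r^2)"
      using zin unfolding Omega_disc_def zl mem_cball .
    hence "cmod (l0 - of_real ((1 + r^2) / (1 - r^2))) \<le> 2 * r / (1 - r^2)" by (simp only: rot_dist)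
    hence le0: "cmod (l0 - 1) \<le> r * cmod (l0 + 1)" using disc_le_iff[of r l0] r0 r4 by simp
    have lm1: "l0 \<noteq> -1"
    proof
      assume "l0 = -1"
      hence "cmod (l0 - 1) = 2" "cmod (l0 + 1) = 0" by simp_all
      thus False using le0 by simp
    qed
    define \<zeta>0 where "\<zeta>0 = (l0 - 1) / (l0 + 1)"
    have Mz: "M \<zeta>0 = z" unfolding M_def \<zeta>0_def using mob2(2)[OF lm1] zl by simp
    have "cmod \<zeta>0 * cmod (l0 + 1) \<le> r * cmod (l0 + 1)" unfolding \<zeta>0_def using mob2(3)[OF lm1] le0 by simp
    moreover have "0 < cmod (l0 + 1)"
    proof -
      have "l0 + 1 \<noteq> 0"
      proof
        assume "l0 + 1 = 0" hence "l0 = -1" by (metis add_diff_cancel_right' diff_0)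
        thus False using lm1 by simp
      qed
      thus ?thesis by simp
    qed
    ultimately have "cmod \<zeta>0 \<le> r" by (rule mult_right_le_imp_le)
    hence zs: "cmod \<zeta>0 \<le> s / 2" by (simp add: s_def)
    have "cmod (k \<zeta>0) \<le> 8 * (9/4 * B) / (3 * s)"
      by (rule scalar_core[OF s0 holk openU sub2 _ bdk zs]) (use B0 in auto)
    moreover have "k \<zeta>0 = \<phi> (F z)" unfolding k_def f_def using Mz by simp
    ultimately have "norm (F z) \<le> 8 * (9/4 * B) / (3 * s)" using eq by simp
    also have "\<dots> = B * 3 / r" using r0 by (simp add: s_def field_simps)
    finally show ?thesis .
  qed
  show ?thesis by (rule exI[of _ 3]) (use main in auto)
qed

end
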